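(* Let $l_{\max}\ge 1$ be an integer, let $C_1,\dots,C_{l_{\max}}\in\mathbb{R}$, and let $N_0\in\mathbb{N}$. For each integer $N\ge N_0$ let $E^N_1,\dots,E^N_N$ be a symmetric sequence of events (on some probability space depending on $N$) whose correlation coefficients $C^{(N)}_k$, $1\le k\le N$, satisfy $C^{(N)}_k=C_k$ for $1\le k\le l_{\max}$ and $C^{(N)}_k=0$ for $l_{\max}<k\le N$ (i.e. for every $N\ge N_0$ the sequence is correlated up to order $l_{\max}$ with the same correlation coefficients $C_1,\dots,C_{l_{\max}}$). Let $p_N$ denote the count probability of $E^N_1,\dots,E^N_N$. Then for every $s\in\mathbb{N}_0$ the limit $p_\infty(s):=\lim_{N\to\infty}p_N(s)$ exists, and the characteristic function of $p_\infty$ is $$\chi(u)=\sum_{s=0}^\infty e^{ius}p_\infty(s)=\exp\Big[\sum_{l=1}^{l_{\max}}\sum_{t=0}^{l}(-1)^{l-t}\frac{C_l}{l!}\binom{l}{t}e^{itu}\Big],\qquad u\in\mathbb{R}.$$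
   Context: For an event $E$ on a probability space $(\Omega,\Sigma,P)$, $\mathbbm{1}_E$ denotes its indicator function. A finite sequence of events $E_1,\dots,E_N$ on a common probability space is called symmetric if for all $r_1,\dots,r_N\in\{0,1\}$ and all permutations $\sigma$ of $\{1,\dots,N\}$, $P(\mathbbm{1}_{E_1}=r_1,\dots,\mathbbm{1}_{E_N}=r_N)=P(\mathbbm{1}_{E_1}=r_{\sigma(1)},\dots,\mathbbm{1}_{E_N}=r_{\sigma(N)})$. For $1\le k\le N$ the probability function of order $k$ is $P_k(r_1,\dots,r_k):=\sum_{r_{k+1},\dots,r_N\in\{0,1\}}P(\mathbbm{1}_{E_1}=r_1,\dots,\mathbbm{1}_{E_N}=r_N)$. The correlation functions $G_k:\{0,1\}^k\to\mathbb{R}$ are defined by $G_1:=P_1$ and, recursively for $1<k\le N$, $$G_k(r_1,\dots,r_k):=P_k(r_1,\dots,r_k)-\sum_{\sigma}\sum_{l=1}^{k-1}\frac{1}{(l-1)!\,(k-l)!}G_l(r_1,r_{\sigma(2)},\dots,r_{\sigma(l)})\,P_{k-l}(r_{\sigma(l+1)},\dots,r_{\sigma(k)}),$$ where $\sigma$ runs over all permutations of $\{2,\dots,k\}$. The correlation coefficient of order $k$ is $C_k:=N^kG_k(1,\dots,1)$. The count probability is $p_N(s):=\mathbb{E}\big[\delta(s-\sum_{l=1}^N\mathbbm{1}_{E_l})\big]$ for $s\in\mathbb{N}_0$, where $\delta(0)=1$ and $\delta(k)=0$ for $k\neq0$; i.e. $p_N(s)$ is the probability that exactly $s$ of the events occur.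 *)

theory Defs
  imports "HOL-Probability.Probability" "HOL-Combinatorics.Permutations"
begin

text \<open>Events of the N-th family are E 0, ..., E (N-1) (0-indexed shift of E_1..E_N).
  Configurations (r_1,...,r_k) are lists of naturals with entries in {0,1}.\<close>

definition bin_lists :: "nat \<Rightarrow> nat list set" where
  "bin_lists k = {rs. length rs = k \<and> set rs \<subseteq> {0,1}}"

definition joint_prob :: "'a measure \<Rightarrow> (nat \<Rightarrow> 'a set) \<Rightarrow> nat list \<Rightarrow> real" where
  "joint_prob M E rs =
     measure M {\<omega> \<in> space M. \<forall>i < length rs. indicator (E i) \<omega> = real (rs ! i)}"

definition symmetric_events :: "'a measure \<Rightarrow> (nat \<Rightarrow> 'a set) \<Rightarrow> nat \<Rightarrow> bool" where
  "symmetric_events M E N \<longleftrightarrow>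
     (\<forall>rs \<in> bin_lists N. \<forall>\<sigma>. \<sigma> permutes {..<N} \<longrightarrow>
        joint_prob M E rs = joint_prob M E (map (\<lambda>i. rs ! \<sigma> i) [0..<N]))"

definition prob_fun :: "'a measure \<Rightarrow> (nat \<Rightarrow> 'a set) \<Rightarrow> nat \<Rightarrow> nat list \<Rightarrow> real" where
  "prob_fun M E N rs = (\<Sum>rs' \<in> bin_lists (N - length rs). joint_prob M E (rs @ rs'))"

text \<open>Correlation functions G_k, k = length rs (1-based positions 1..k of the paper
  are 0..k-1 here; sigma runs over permutations of positions 2..k, i.e. {1..<k}).\<close>
function corr_fun :: "'a measure \<Rightarrow> (nat \<Rightarrow> 'a set) \<Rightarrow> nat \<Rightarrow> nat list \<Rightarrow> real" where
  "corr_fun M E N rs =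
     (if length rs \<le> 1 then prob_fun M E N rs
      else prob_fun M E N rs -
        (\<Sum>\<sigma> \<in> {\<sigma>. \<sigma> permutes {1..<length rs}}.
           \<Sum>l = 1..length rs - 1.
             1 / (fact (l - 1) * fact (length rs - l)) *
             corr_fun M E N (take l (map (\<lambda>i. rs ! \<sigma> i) [0..<length rs])) *
             prob_fun M E N (drop l (map (\<lambda>i. rs ! \<sigma> i) [0..<length rs]))))"
  by pat_completeness auto
termination
  by (relation "Wellfounded.measure (\<lambda>(M, E, N, rs). length rs)") auto

definition corr_coeff :: "'a measure \<Rightarrow> (nat \<Rightarrow> 'a set) \<Rightarrow> nat \<Rightarrow> nat \<Rightarrow> real" where
  "corr_coeff M E N k = real N ^ k * corr_fun M E N (replicate k 1)"

definition count_prob :: "'a measure \<Rightarrow> (nat \<Rightarrow> 'a set) \<Rightarrow> nat \<Rightarrow> nat \<Rightarrow> real" where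
  "count_prob M E N s = measure M {\<omega> \<in> space M. card {i \<in> {..<N}. \<omega> \<in> E i} = s}"

end

theory Submission
  imports Defs
begin

fun mu :: "(nat \<Rightarrow> real) \<Rightarrow> nat \<Rightarrow> real" where
  "mu c k = (if k = 0 then 1 else (\<Sum>l=1..k. real ((k-1) choose (l-1)) * c l * mu c (k-l)))"
declare mu.simps[simp del]

lemma mu_bound:
  assumes r: "r > 0" and cz: "\<And>l. l > L \<Longrightarrow> c l = 0"
  shows "\<exists>K. \<forall>k. \<bar>mu c k\<bar> \<le> K * fact k * r^k"
proof -
  define A where "A = (\<Sum>l=1..L. \<bar>c l\<bar> / r^l)"
  have A: "(\<Sum>l=1..k. \<bar>c l\<bar> / r^l) \<le> A" for k
  proof -
    have "(\<Sum>l=1..k. \<bar>c l\<bar> / r^l) \<le> (\<Sum>l=1..max k L. \<bar>c l\<bar> / r^l)"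
      by (rule sum_mono2) (use r in auto)
    also have "\<dots> = A" unfolding A_def
      by (rule sum.mono_neutral_right) (use cz in auto)
    finally show ?thesis .
  qed
  define k0 where "k0 = nat \<lceil>A\<rceil> + 1"
  define K where "K = (\<Sum>k<k0. \<bar>mu c k\<bar> / (fact k * r^k)) + 1"
  have K1: "K \<ge> 1" unfolding K_def using r by (auto intro!: sum_nonneg divide_nonneg_nonneg)
  have "\<bar>mu c k\<bar> \<le> K * fact k * r^k" for k
  proof (induction k rule: less_induct)
    case (less k)
    have pos: "fact k * r^k > 0" using r by simp
    show ?case
    proof (cases "k < k0")
      case True
      have "\<bar>mu c k\<bar> / (fact k * r^k) \<le> (\<Sum>k<k0. \<bar>mu c k\<bar> / (fact k * r^k))"
        by (rule member_le_sum) (use True r in auto)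
      also have "\<dots> \<le> K" unfolding K_def by simp
      finally show ?thesis using pos by (simp add: divide_le_eq mult.assoc)
    next
      case False
      then have k1: "k \<ge> 1" and kA: "A \<le> real k" unfolding k0_def by linarith+
      have "\<bar>mu c k\<bar> = \<bar>\<Sum>l=1..k. real ((k-1) choose (l-1)) * c l * mu c (k-l)\<bar>"
        using k1 by (subst mu.simps) simp
      also have "\<dots> \<le> (\<Sum>l=1..k. \<bar>real ((k-1) choose (l-1)) * c l * mu c (k-l)\<bar>)"
        by (rule sum_abs)
      also have "\<dots> \<le> (\<Sum>l=1..k. K * fact (k-1) * r^k * (\<bar>c l\<bar> / r^l))"
      proof (rule sum_mono)
        fix l assume l: "l \<in> {1..k}"
        have ih: "\<bar>mu c (k-l)\<bar> \<le> K * fact (k-l) * r^(k-l)"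
          using less l by auto
        have ch: "real ((k-1) choose (l-1)) * fact (k-l) \<le> fact (k-1)"
        proof -
          have e: "k - 1 - (l - 1) = k - l" using l by auto
          have "fact (l-1) * fact (k-l) * ((k-1) choose (l-1)) = (fact (k-1)::nat)"
            using binomial_fact_lemma[of "l-1" "k-1"] l e by auto
          then have "real ((k-1) choose (l-1)) * fact (l-1) * fact (k-l) = fact (k-1)"
            by (metis (mono_tags, lifting) mult.commute mult.left_commute of_nat_fact of_nat_mult)
          then have eq: "real ((k-1) choose (l-1)) * fact (k-l) * fact (l-1) = fact (k-1)"
            by (simp add: mult_ac)
          have "real ((k-1) choose (l-1)) * fact (k-l) \<le> real ((k-1) choose (l-1)) * fact (k-l) * fact (l-1)"
            using mult_left_mono[of 1 "fact(l-1)" "real ((k-1) choose (l-1)) * fact (k-l)"] by simp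
          then show ?thesis using eq by simp
        qed
        have rr: "r^(k-l) = r^k / r^l" using l r by (simp add: power_diff)
        have "\<bar>real ((k-1) choose (l-1)) * c l * mu c (k-l)\<bar>
              = real ((k-1) choose (l-1)) * \<bar>c l\<bar> * \<bar>mu c (k-l)\<bar>" by (simp add: abs_mult)
        also have "\<dots> \<le> real ((k-1) choose (l-1)) * \<bar>c l\<bar> * (K * fact (k-l) * r^(k-l))"
          by (intro mult_left_mono ih) auto
        also have "\<dots> = (real ((k-1) choose (l-1)) * fact (k-l)) * (K * \<bar>c l\<bar> * r^(k-l))"
          by (simp add: algebra_simps)
        also have "\<dots> \<le> fact (k-1) * (K * \<bar>c l\<bar> * r^(k-l))"
          by (intro mult_right_mono ch) (use K1 r in auto)
        also have "\<dots> = K * fact (k-1) * r^k * (\<bar>c l\<bar> / r^l)"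
          using r by (simp add: rr field_simps)
        finally show "\<bar>real ((k-1) choose (l-1)) * c l * mu c (k-l)\<bar> \<le> K * fact (k-1) * r^k * (\<bar>c l\<bar> / r^l)" .
      qed
      also have "\<dots> = K * fact (k-1) * r^k * (\<Sum>l=1..k. \<bar>c l\<bar> / r^l)"
        by (simp add: sum_distrib_left)
      also have "\<dots> \<le> K * fact (k-1) * r^k * real k"
        by (intro mult_left_mono order.trans[OF A kA]) (use K1 r in auto)
      also have "\<dots> = K * fact k * r^k"
        using k1 by (simp add: fact_reduce[of k])
      finally show ?thesis .
    qed
  qed
  then show ?thesis by blast
qed


lemma mu_norm_summable:
  assumes cz: "\<And>l. l > L \<Longrightarrow> c l = 0"
  shows "summable (\<lambda>n. norm (complex_of_real (mu c n / fact n) * y^n))"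
proof -
  define r where "r = 1 / (2 * (norm y + 1))"
  have "0 < 2 * (norm y + 1)" using norm_ge_zero[of y] by (smt (verit))
  then have r: "r > 0" unfolding r_def by simp
  obtain K where K: "\<And>k. \<bar>mu c k\<bar> \<le> K * fact k * r^k" using mu_bound[of r L c, OF r cz] by blast
  have ry: "r * norm y \<le> 1/2"
  proof -
    have p: "0 < 2 * (norm y + 1)" using norm_ge_zero[of y] by (smt (verit))
    have "r * norm y = norm y / (2*(norm y+1))" unfolding r_def by simp
    also have "\<dots> \<le> (norm y + 1)/(2*(norm y+1))" by (rule divide_right_mono) (use p in auto)
    also have "\<dots> = 1/2" using p by simp
    finally show ?thesis .
  qed
  have b: "norm (complex_of_real (mu c n / fact n) * y^n) \<le> K * (1/2)^n" for n
  proof -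
    have "norm (complex_of_real (mu c n / fact n) * y^n) = \<bar>mu c n\<bar> / fact n * norm y ^ n"
      by (simp only: norm_mult norm_power norm_of_real) (simp add: abs_divide)
    also have "\<dots> \<le> K * r^n * norm y ^ n"
      using K[of n] by (intro mult_right_mono) (auto simp: divide_le_eq mult_ac)
    also have "\<dots> = K * (r * norm y)^n" by (simp add: power_mult_distrib)
    also have "\<dots> \<le> K * (1/2)^n"
    proof (intro mult_left_mono power_mono ry)
      show "0 \<le> r * norm y" using r by simp
      show "0 \<le> K" using K[of 0] by simp
    qed
    finally show ?thesis .
  qed
  show ?thesis
    by (rule summable_comparison_test'[where g="\<lambda>n. K * (1/2)^n" and N=0])
       (use b in \<open>auto intro: summable_mult summable_geometric\<close>)
qed

lemma diffs_mu:
  "diffs (\<lambda>n. complex_of_real (mu c n / fact n)) n =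
     (\<Sum>i\<le>n. complex_of_real (c (Suc i) / fact i) * complex_of_real (mu c (n - i) / fact (n - i)))"
proof -
  have "mu c (Suc n) = (\<Sum>l=1..Suc n. real (n choose (l-1)) * c l * mu c (Suc n-l))"
    by (subst mu.simps) simp
  also have "\<dots> = (\<Sum>i=0..n. real (n choose i) * c (Suc i) * mu c (n - i))"
    unfolding One_nat_def sum.shift_bounds_cl_Suc_ivl by simp
  finally have m: "mu c (Suc n) / fact n = (\<Sum>i\<le>n. c (Suc i) / fact i * (mu c (n - i) / fact (n - i)))"
    by (simp add: atMost_atLeast0 sum_divide_distrib binomial_fact)
  have "diffs (\<lambda>n. complex_of_real (mu c n / fact n)) n = complex_of_real (mu c (Suc n) / fact n)"
  proof -
    have "real (Suc n) * (mu c (Suc n) / fact (Suc n)) = mu c (Suc n) / fact n"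
      by (simp add: fact_Suc[of n] del: of_nat_Suc)
    then have "complex_of_real (real (Suc n) * (mu c (Suc n) / fact (Suc n))) = complex_of_real (mu c (Suc n) / fact n)"
      by simp
    then show ?thesis unfolding diffs_def by (metis of_real_mult of_real_of_nat_eq)
  qed
  also have "\<dots> = (\<Sum>i\<le>n. complex_of_real (c (Suc i) / fact i) * complex_of_real (mu c (n - i) / fact (n - i)))"
    unfolding m by simp
  finally show ?thesis .
qed



lemma mu_exp:
  assumes cz: "\<And>l. l > L \<Longrightarrow> c l = 0"
  shows "(\<lambda>n. complex_of_real (mu c n / fact n) * w^n) sums
           exp (\<Sum>m<L. complex_of_real (c (Suc m) / fact (Suc m)) * w^(Suc m))"
proof -
  define cf where "cf n = complex_of_real (mu c n / fact n)" for n
  define f where "f w = (\<Sum>n. cf n * w^n)" for w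
  define P where "P w = (\<Sum>m<L. complex_of_real (c (Suc m) / fact (Suc m)) * w^(Suc m))" for w
  define d where "d m = complex_of_real (c (Suc m) / fact m)" for m
  have sm: "summable (\<lambda>n. norm (cf n * y^n))" for y
    unfolding cf_def by (rule mu_norm_summable[OF cz])
  have sm': "summable (\<lambda>n. cf n * y^n)" for y
    by (rule summable_norm_cancel[OF sm])
  have df: "(f has_field_derivative (\<Sum>n. diffs cf n * w^n)) (at w)" for w
    unfolding f_def by (rule termdiffs_strong_converges_everywhere) (rule sm')
  have dsum: "(\<Sum>n. diffs cf n * w^n) = (\<Sum>m<L. d m * w^m) * f w" for w
  proof -
    have dz: "d m * w^m = 0" if "m \<notin> {..<L}" for m
      using that cz[of "Suc m"] by (simp add: d_def)
    have "(\<Sum>n. diffs cf n * w^n) = (\<Sum>n. \<Sum>i\<le>n. (d i * w^i) * (cf (n-i) * w^(n-i)))"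
    proof (rule suminf_cong)
      fix n
      have "diffs cf n * w^n = (\<Sum>i\<le>n. d i * cf (n-i) * w^n)"
        unfolding cf_def d_def diffs_mu by (simp add: sum_distrib_right)
      also have "\<dots> = (\<Sum>i\<le>n. (d i * w^i) * (cf (n-i) * w^(n-i)))"
      proof (rule sum.cong)
        fix i assume "i \<in> {..n}"
        then have "w^n = w^i * w^(n-i)" by (simp add: power_add[symmetric])
        then show "d i * cf (n-i) * w^n = (d i * w^i) * (cf (n-i) * w^(n-i))" by (simp add: mult_ac)
      qed simp
      finally show "diffs cf n * w^n = (\<Sum>i\<le>n. (d i * w^i) * (cf (n-i) * w^(n-i)))" .
    qed
    also have "\<dots> = (\<Sum>k. d k * w^k) * (\<Sum>k. cf k * w^k)"
    proof (rule Cauchy_product[symmetric])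
      show "summable (\<lambda>k. norm (d k * w ^ k))"
        by (rule summable_finite[of "{..<L}"]) (use dz in auto)
      show "summable (\<lambda>k. norm (cf k * w ^ k))" by (rule sm)
    qed
    also have "(\<Sum>k. d k * w^k) = (\<Sum>m<L. d m * w^m)"
      by (rule suminf_finite) (use dz in auto)
    finally show ?thesis unfolding f_def .
  qed
  have dP: "(P has_field_derivative (\<Sum>m<L. d m * w^m)) (at w)" for w
    unfolding P_def
  proof (rule DERIV_sum)
    fix m
    show "((\<lambda>w. complex_of_real (c (Suc m) / fact (Suc m)) * w^(Suc m)) has_field_derivative d m * w^m) (at w)"
    proof -
      have "((\<lambda>w. complex_of_real (c (Suc m) / fact (Suc m)) * w^(Suc m)) has_field_derivative
              complex_of_real (c (Suc m) / fact (Suc m)) * (of_nat (Suc m) * (1 * w^(Suc m - Suc 0)))) (at w)"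
        by (intro DERIV_cmult DERIV_power DERIV_ident)
      moreover have "c (Suc m) / fact (Suc m) * real (Suc m) = c (Suc m) / fact m"
        by (simp add: fact_Suc[of m] del: of_nat_Suc)
      then have "complex_of_real (c (Suc m) / fact (Suc m)) * of_nat (Suc m) = d m"
        unfolding d_def by (metis of_real_mult of_real_of_nat_eq)
      ultimately show ?thesis by (simp add: mult.assoc[symmetric])
    qed
  qed
  have dg: "((\<lambda>w. f w * exp (- P w)) has_field_derivative 0) (at w within UNIV)" for w
  proof -
    have A: "((\<lambda>w. exp (- P w)) has_field_derivative exp (- P w) * - (\<Sum>m<L. d m * w^m)) (at w)"
      by (rule DERIV_chain2[OF DERIV_exp]) (rule DERIV_minus[OF dP])
    have "((\<lambda>w. f w * exp (- P w)) has_field_derivative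
           (\<Sum>n. diffs cf n * w^n) * exp (- P w) + (exp (- P w) * - (\<Sum>m<L. d m * w^m)) * f w) (at w)"
      by (rule DERIV_mult[OF df A])
    moreover have "(\<Sum>n. diffs cf n * w^n) * exp (- P w) + (exp (- P w) * - (\<Sum>m<L. d m * w^m)) * f w = 0"
      by (simp only: dsum) (simp add: algebra_simps)
    ultimately show ?thesis by simp
  qed
  obtain k where k: "\<And>w. f w * exp (- P w) = k"
    using has_field_derivative_zero_constant[OF convex_UNIV dg] by blast
  have "f 0 * exp (- P 0) = 1"
  proof -
    have "f 0 = cf 0" unfolding f_def by (rule powser_zero)
    moreover have "cf 0 = 1" by (simp add: cf_def mu.simps)
    moreover have "P 0 = 0" by (simp add: P_def)
    ultimately show ?thesis by simp
  qed
  then have "f w * exp (- P w) = 1" using k by metis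
  then have fw: "f w = exp (P w)"
    by (metis exp_minus_inverse mult.commute mult.left_commute mult_1)
  show ?thesis
  proof -
    have "(\<lambda>n. cf n * w^n) sums f w" unfolding f_def by (rule summable_sums[OF sm'])
    then show ?thesis unfolding fw P_def cf_def .
  qed
qed



definition pinf :: "(nat \<Rightarrow> real) \<Rightarrow> nat \<Rightarrow> real" where
  "pinf c s = (\<Sum>j. (-1)^j * mu c (s+j) / (fact s * fact j))"

lemma inner_bound_summable:
  assumes cz: "\<And>l. l > L \<Longrightarrow> c l = 0"
  shows "summable (\<lambda>j. \<bar>mu c (s+j)\<bar> / (fact s * fact j))"
proof -
  obtain K where K: "\<And>k. \<bar>mu c k\<bar> \<le> K * fact k * (1/4)^k"
    using mu_bound[of "1/4" L c, OF _ cz] by auto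
  have K0: "K \<ge> 0" using K[of 0] by simp
  have b: "\<bar>mu c (s+j)\<bar> / (fact s * fact j) \<le> (K * (1/2)^s) * (1/2)^j" for j
  proof -
    have bf: "real ((s+j) choose s) = fact (s+j) / (fact s * fact j)"
      using binomial_fact[of s "s+j", where 'a=real] by simp
    have "\<bar>mu c (s+j)\<bar> / (fact s * fact j) \<le> K * fact (s+j) * (1/4)^(s+j) / (fact s * fact j)"
      by (intro divide_right_mono K) auto
    also have "\<dots> = K * real ((s+j) choose s) * (1/4)^(s+j)" by (simp add: bf)
    also have "\<dots> \<le> K * 2^(s+j) * (1/4)^(s+j)"
    proof -
      have "real ((s+j) choose s) \<le> 2^(s+j)"
        using binomial_le_pow2[of "s+j" s] by (metis of_nat_le_iff of_nat_numeral of_nat_power)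
      then show ?thesis using K0 by (intro mult_right_mono mult_left_mono) auto
    qed
    also have "\<dots> = K * (1/2)^(s+j)"
      by (simp add: power_mult_distrib[symmetric])
    also have "\<dots> = (K * (1/2)^s) * (1/2)^j" by (simp add: power_add)
    finally show ?thesis .
  qed
  show ?thesis
    by (rule summable_comparison_test'[where g="\<lambda>j. (K * (1/2)^s) * (1/2)^j" and N=0])
       (use b in \<open>auto intro: summable_mult summable_geometric\<close>)
qed

lemma pinf_sums_aux:
  assumes cz: "\<And>l. l > L \<Longrightarrow> c l = 0"
  shows "(\<lambda>j. (-1)^j * mu c (s+j) / (fact s * fact j)) sums pinf c s"
  unfolding pinf_def
  by (rule summable_sums, rule summable_rabs_cancel)
     (use inner_bound_summable[of L c, OF cz, of s] in \<open>simp add: abs_mult\<close>)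

lemma pinf_limit:
  fixes dN :: "nat \<Rightarrow> nat \<Rightarrow> real"
  assumes cz: "\<And>l. l > L \<Longrightarrow> c l = 0"
    and db: "\<And>N k. \<bar>dN N k\<bar> \<le> 1"
    and dl: "\<And>k. (\<lambda>N. dN N k) \<longlonglongrightarrow> 1"
  shows "(\<lambda>N. \<Sum>j. (-1)^j * dN N (s+j) * mu c (s+j) / (fact s * fact j)) \<longlonglongrightarrow> pinf c s"
proof -
  have "eventually (\<lambda>n. summable (\<lambda>k. norm ((-1)^k * dN n (s+k) * mu c (s+k) / (fact s * fact k)))) sequentially \<and>
        summable (\<lambda>n. norm ((-1)^n * 1 * mu c (s+n) / (fact s * fact n))) \<and>
        ((\<lambda>n. suminf (\<lambda>k. (-1)^k * dN n (s+k) * mu c (s+k) / (fact s * fact k))) \<longlongrightarrow>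
           suminf (\<lambda>k. (-1)^k * 1 * mu c (s+k) / (fact s * fact k))) sequentially"
  proof (rule tannerys_theorem[where M="\<lambda>j. \<bar>mu c (s+j)\<bar> / (fact s * fact j)"])
    show "((\<lambda>n. (-1)^k * dN n (s+k) * mu c (s+k) / (fact s * fact k)) \<longlonglongrightarrow>
            (-1)^k * 1 * mu c (s+k) / (fact s * fact k))" for k
      by (intro tendsto_intros dl) simp
    show "\<forall>\<^sub>F (k, n) in at_top \<times>\<^sub>F sequentially.
            norm ((-1)^k * dN n (s+k) * mu c (s+k) / (fact s * fact k)) \<le> \<bar>mu c (s+k)\<bar> / (fact s * fact k)"
    proof (rule always_eventually, clarify)
      fix k n
      have "\<bar>dN n (s+k)\<bar> * \<bar>mu c (s+k)\<bar> \<le> 1 * \<bar>mu c (s+k)\<bar>"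
        by (intro mult_right_mono db) auto
      then show "norm ((-1)^k * dN n (s+k) * mu c (s+k) / (fact s * fact k)) \<le> \<bar>mu c (s+k)\<bar> / (fact s * fact k)"
        by (simp add: abs_mult divide_right_mono)
    qed
    show "summable (\<lambda>j. \<bar>mu c (s+j)\<bar> / (fact s * fact j))" by (rule inner_bound_summable[of L c, OF cz])
  qed simp
  then show ?thesis unfolding pinf_def by simp
qed



lemma binom_sum_c:
  fixes x :: complex
  shows "(\<Sum>s\<le>k. x^s * complex_of_real ((-1)^(k-s) * a / (fact s * fact (k-s)))) =
         complex_of_real (a / fact k) * (x - 1)^k"
proof -
  have "complex_of_real (a / fact k) * (x - 1)^k =
        complex_of_real (a / fact k) * (\<Sum>s\<le>k. of_nat (k choose s) * x^s * (-1)^(k-s))"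
    using binomial_ring[of x "-1" k] by simp
  also have "\<dots> = (\<Sum>s\<le>k. x^s * complex_of_real ((-1)^(k-s) * a / (fact s * fact (k-s))))"
    unfolding sum_distrib_left
  proof (rule sum.cong)
    fix s assume s: "s \<in> {..k}"
    have bf: "real (k choose s) = fact k / (fact s * fact (k-s))"
      using binomial_fact[of s k, where 'a=real] s by simp
    have r: "a / fact k * real (k choose s) * (-1)^(k-s) = (-1)^(k-s) * a / (fact s * fact (k-s))"
      by (simp add: bf)
    have "complex_of_real (a / fact k) * (of_nat (k choose s) * x^s * (-1)^(k-s)) =
          x^s * complex_of_real (a / fact k * real (k choose s) * (-1)^(k-s))"
      by simp
    then show "complex_of_real (a / fact k) * (of_nat (k choose s) * x^s * (-1)^(k-s)) =
          x^s * complex_of_real ((-1)^(k-s) * a / (fact s * fact (k-s)))"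
      by (simp only: r)
  qed simp
  finally show ?thesis by simp
qed

lemma binom_sum_r:
  fixes x :: real
  shows "(\<Sum>s\<le>k. x^s * (a / (fact s * fact (k-s)))) = a / fact k * (x + 1)^k"
proof -
  have "a / fact k * (x + 1)^k = a / fact k * (\<Sum>s\<le>k. of_nat (k choose s) * x^s * 1^(k-s))"
    using binomial_ring[of x 1 k] by simp
  also have "\<dots> = (\<Sum>s\<le>k. x^s * (a / (fact s * fact (k-s))))"
    unfolding sum_distrib_left
  proof (rule sum.cong)
    fix s assume s: "s \<in> {..k}"
    have bf: "real (k choose s) = fact k / (fact s * fact (k-s))"
      using binomial_fact[of s k, where 'a=real] s by simp
    show "a / fact k * (of_nat (k choose s) * x^s * 1^(k-s)) = x^s * (a / (fact s * fact (k-s)))"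
      by (simp add: bf)
  qed simp
  finally show ?thesis by simp
qed

lemma pinf_gen:
  assumes cz: "\<And>l. l > L \<Longrightarrow> c l = 0"
  shows "(\<lambda>s. z^s * complex_of_real (pinf c s)) sums
           exp (\<Sum>m<L. complex_of_real (c (Suc m) / fact (Suc m)) * (z - 1)^(Suc m))"
proof -
  define E where "E = exp (\<Sum>m<L. complex_of_real (c (Suc m) / fact (Suc m)) * (z - 1)^(Suc m))"
  define g where "g = (\<lambda>(k,s). z^s * complex_of_real ((-1)^(k-s) * mu c k / (fact s * fact (k-s))))"
  define T where "T = Sigma (UNIV::nat set) (\<lambda>k. {..k})"
  have inner1: "((\<lambda>s. g (k,s)) has_sum (complex_of_real (mu c k / fact k) * (z-1)^k)) {..k}" for k
    by (rule has_sum_finiteI) (simp_all only: g_def case_prod_conv binom_sum_c finite_atMost)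
  have absT: "(\<lambda>x. norm (g x)) summable_on T"
  proof -
    have nrm: "(\<Sum>s\<le>k. norm (g (k, s))) = norm (complex_of_real (mu c k / fact k) * complex_of_real (norm z + 1)^k)" for k
    proof -
      have "(\<Sum>s\<le>k. norm (g (k, s))) = (\<Sum>s\<le>k. norm z^s * (\<bar>mu c k\<bar> / (fact s * fact (k-s))))"
        by (intro sum.cong refl) (simp only: g_def case_prod_conv norm_mult norm_power norm_of_real, simp add: abs_mult abs_divide)
      also have "\<dots> = \<bar>mu c k\<bar> / fact k * (norm z + 1)^k" by (rule binom_sum_r)
      also have "\<dots> = norm (complex_of_real (mu c k / fact k) * complex_of_real (norm z + 1)^k)"
        by (simp only: norm_mult norm_power norm_of_real) (simp add: abs_divide abs_of_nonneg add_nonneg_nonneg)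
      finally show ?thesis .
    qed
    have "summable (\<lambda>k. norm (complex_of_real (mu c k / fact k) * complex_of_real (norm z + 1)^k))"
      by (rule mu_norm_summable[of L c, OF cz])
    then have sk: "(\<lambda>k. norm (complex_of_real (mu c k / fact k) * complex_of_real (norm z + 1)^k)) summable_on UNIV"
      by (subst summable_on_UNIV_nonneg_real_iff) auto
    show ?thesis unfolding T_def
      by (rule summable_on_SigmaI[OF _ sk]) (auto intro!: has_sum_finiteI simp: nrm)
  qed
  then have "g summable_on T" by (rule abs_summable_summable)
  then obtain S where S: "(g has_sum S) T" using has_sum_infsum by blast
  have "((\<lambda>k. complex_of_real (mu c k / fact k) * (z-1)^k) has_sum S) UNIV"
    by (rule has_sum_Sigma'[OF S[unfolded T_def] inner1])
  moreover have "((\<lambda>k. complex_of_real (mu c k / fact k) * (z-1)^k) has_sum E) UNIV"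
    unfolding E_def
    by (rule norm_summable_imp_has_sum[OF mu_norm_summable[of L c, OF cz] mu_exp[of L c, OF cz]])
  ultimately have SE: "S = E" by (rule has_sum_unique)
  have S2: "((\<lambda>(s,j). g (s+j, s)) has_sum S) (UNIV \<times> UNIV)"
  proof -
    have "((\<lambda>(s,j). g (s+j, s)) has_sum S) (UNIV \<times> UNIV) = (g has_sum S) T"
      by (rule has_sum_reindex_bij_witness[where j="\<lambda>(s,j). (s+j, s)" and i="\<lambda>(k,s). (s, k-s)"])
         (auto simp: T_def)
    then show ?thesis using S by simp
  qed
  have inner2: "((\<lambda>j. (\<lambda>(s,j). g (s+j, s)) (s, j)) has_sum (z^s * complex_of_real (pinf c s))) UNIV" for s
  proof -
    have e: "(\<lambda>j. (\<lambda>(s,j). g (s+j, s)) (s, j)) = (\<lambda>j. z^s * complex_of_real ((-1)^j * mu c (s+j) / (fact s * fact j)))"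
      by (simp add: g_def)
    have "(\<lambda>j. complex_of_real ((-1)^j * mu c (s+j) / (fact s * fact j))) sums complex_of_real (pinf c s)"
      using pinf_sums_aux[of L c, OF cz] by (simp only: sums_of_real_iff)
    then have su: "(\<lambda>j. z^s * complex_of_real ((-1)^j * mu c (s+j) / (fact s * fact j))) sums (z^s * complex_of_real (pinf c s))"
      by (rule sums_mult)
    have "summable (\<lambda>j. norm z ^ s * (\<bar>mu c (s+j)\<bar> / (fact s * fact j)))"
      by (rule summable_mult) (rule inner_bound_summable[of L c, OF cz])
    moreover have "(\<lambda>j. norm (z^s * complex_of_real ((-1)^j * mu c (s+j) / (fact s * fact j)))) =
        (\<lambda>j. norm z ^ s * (\<bar>mu c (s+j)\<bar> / (fact s * fact j)))"
      by (rule ext) (simp only: norm_mult norm_power norm_of_real, simp add: abs_mult abs_divide)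
    ultimately have ns: "summable (\<lambda>j. norm (z^s * complex_of_real ((-1)^j * mu c (s+j) / (fact s * fact j))))"
      by simp
    show ?thesis unfolding e by (rule norm_summable_imp_has_sum[OF ns su])
  qed
  have "((\<lambda>s. z^s * complex_of_real (pinf c s)) has_sum S) UNIV"
    by (rule has_sum_Sigma'[OF S2 inner2])
  then show ?thesis unfolding SE E_def by (rule has_sum_imp_sums)
qed



lemma bin_lists_0: "bin_lists 0 = {[]}"
  by (auto simp: bin_lists_def)

lemma bin_lists_Suc: "bin_lists (Suc n) = (Cons 0 ` bin_lists n) \<union> (Cons 1 ` bin_lists n)"
  by (auto simp: bin_lists_def length_Suc_conv)

lemma finite_bin_lists: "finite (bin_lists n)"
proof -
  have "bin_lists n = {xs. set xs \<subseteq> {0,1} \<and> length xs = n}" by (auto simp: bin_lists_def)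
  then show ?thesis using finite_lists_length_eq[of "{0::nat,1}" n] by simp
qed

lemma pascal_sum:
  fixes f :: "nat \<Rightarrow> real"
  shows "(\<Sum>j\<le>Suc n. real (Suc n choose j) * f j) =
         (\<Sum>j\<le>n. real (n choose j) * f j) + (\<Sum>j\<le>n. real (n choose j) * f (Suc j))"
proof -
  have "(\<Sum>j\<le>Suc n. real (Suc n choose j) * f j) = f 0 + (\<Sum>j\<le>n. real (Suc n choose Suc j) * f (Suc j))"
    by (subst sum.atMost_Suc_shift) simp
  also have "\<dots> = f 0 + (\<Sum>j\<le>n. real (n choose Suc j) * f (Suc j)) + (\<Sum>j\<le>n. real (n choose j) * f (Suc j))"
    by (simp add: sum.distrib algebra_simps)
  also have "f 0 + (\<Sum>j\<le>n. real (n choose Suc j) * f (Suc j)) = (\<Sum>j\<le>Suc n. real (n choose j) * f j)"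
    by (subst sum.atMost_Suc_shift) simp
  also have "\<dots> = (\<Sum>j\<le>n. real (n choose j) * f j)"
    by simp
  finally show ?thesis .
qed

lemma sum_bin_lists:
  fixes f :: "nat \<Rightarrow> real"
  shows "(\<Sum>rs\<in>bin_lists n. f (sum_list rs)) = (\<Sum>j\<le>n. real (n choose j) * f j)"
proof (induction n arbitrary: f)
  case 0
  then show ?case by (simp add: bin_lists_0)
next
  case (Suc n)
  have "(\<Sum>rs\<in>bin_lists (Suc n). f (sum_list rs)) =
        (\<Sum>rs\<in>Cons 0 ` bin_lists n. f (sum_list rs)) + (\<Sum>rs\<in>Cons 1 ` bin_lists n. f (sum_list rs))"
    unfolding bin_lists_Suc by (rule sum.union_disjoint) (auto simp: finite_bin_lists)
  also have "\<dots> = (\<Sum>rs\<in>bin_lists n. f (sum_list rs)) + (\<Sum>rs\<in>bin_lists n. f (Suc (sum_list rs)))"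
    by (subst sum.reindex, simp add: inj_on_def)+ simp
  also have "\<dots> = (\<Sum>j\<le>n. real (n choose j) * f j) + (\<Sum>j\<le>n. real (n choose j) * f (Suc j))"
    using Suc[of f] Suc[of "\<lambda>j. f (Suc j)"] by simp
  also have "\<dots> = (\<Sum>j\<le>Suc n. real (Suc n choose j) * f j)"
    by (rule pascal_sum[symmetric])
  finally show ?case .
qed

lemma mset01:
  "set rs \<subseteq> {0,1} \<Longrightarrow>
     mset rs = replicate_mset (sum_list rs) 1 + replicate_mset (length rs - sum_list rs) 0 \<and>
     sum_list rs \<le> length rs"
proof (induction rs)
  case Nil
  then show ?case by simp
next
  case (Cons a rs)
  then have a: "a = 0 \<or> a = 1" and IH: "mset rs = replicate_mset (sum_list rs) 1 + replicate_mset (length rs - sum_list rs) 0"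
    "sum_list rs \<le> length rs" by auto
  show ?case
  proof (cases "a = 0")
    case True
    have "Suc (length rs) - sum_list rs = Suc (length rs - sum_list rs)" using IH(2) by simp
    then show ?thesis using True IH by simp
  next
    case False
    then have "a = 1" using a by simp
    then show ?thesis using IH by simp
  qed
qed

lemma inversion_aux:
  fixes H :: "nat \<Rightarrow> real"
  shows "(\<Sum>j\<le>n. (-1)^j * real (n choose j) * (\<Sum>i\<le>n-j. real ((n-j) choose i) * H (j+i))) = H 0"
proof -
  have S: "Sigma {..n} (\<lambda>j. {..n-j}) = {(j,i). j+i \<le> n}" by auto
  have "(\<Sum>j\<le>n. (-1)^j * real (n choose j) * (\<Sum>i\<le>n-j. real ((n-j) choose i) * H (j+i))) =
        (\<Sum>(j,i)\<in>Sigma {..n} (\<lambda>j. {..n-j}). (-1)^j * real (n choose j) * real ((n-j) choose i) * H (j+i))"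
    by (simp add: sum.Sigma[symmetric] sum_distrib_left mult_ac)
  also have "\<dots> = (\<Sum>(j,i)\<in>{(j,i). j+i \<le> n}. (-1)^j * real (n choose j) * real ((n-j) choose i) * H (j+i))"
    unfolding S ..
  also have "\<dots> = (\<Sum>m\<le>n. \<Sum>j\<le>m. (-1)^j * real (n choose j) * real ((n-j) choose (m-j)) * H (j+(m-j)))"
    by (rule sum.triangle_reindex_eq)
  also have "\<dots> = (\<Sum>m\<le>n. real (n choose m) * H m * (\<Sum>j\<le>m. (-1)^j * real (m choose j)))"
  proof (rule sum.cong[OF refl])
    fix m assume m: "m \<in> {..n}"
    show "(\<Sum>j\<le>m. (-1)^j * real (n choose j) * real ((n-j) choose (m-j)) * H (j+(m-j))) =
          real (n choose m) * H m * (\<Sum>j\<le>m. (-1)^j * real (m choose j))"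
      unfolding sum_distrib_left
    proof (rule sum.cong[OF refl])
      fix j assume j: "j \<in> {..m}"
      have "(n choose m) * (m choose j) = (n choose j) * ((n - j) choose (m - j))"
        by (rule choose_mult) (use j m in auto)
      then have "real (n choose j) * real ((n-j) choose (m-j)) = real (n choose m) * real (m choose j)"
        by (metis of_nat_mult)
      moreover have "j + (m - j) = m" using j by auto
      ultimately show "(-1)^j * real (n choose j) * real ((n-j) choose (m-j)) * H (j+(m-j)) =
            real (n choose m) * H m * ((-1)^j * real (m choose j))"
        by (simp add: mult_ac)
    qed
  qed
  also have "\<dots> = (\<Sum>m\<le>n. if m = 0 then H 0 else 0)"
  proof (rule sum.cong[OF refl])
    fix m
    show "real (n choose m) * H m * (\<Sum>j\<le>m. (-1)^j * real (m choose j)) = (if m = 0 then H 0 else 0)"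
      using choose_alternating_sum[of m, where 'a=real] by (cases "m = 0") auto
  qed
  also have "\<dots> = H 0" by simp
  finally show ?thesis .
qed



definition vecE :: "(nat \<Rightarrow> 'a set) \<Rightarrow> nat \<Rightarrow> 'a \<Rightarrow> nat list" where
  "vecE E N \<omega> = map (\<lambda>i. if \<omega> \<in> E i then 1 else 0) [0..<N]"

lemma vec_bin: "vecE E N \<omega> \<in> bin_lists N"
  by (auto simp: bin_lists_def vecE_def)

lemma vec_eq_iff:
  assumes rs: "rs \<in> bin_lists N"
  shows "(vecE E N \<omega> = rs) \<longleftrightarrow> (\<forall>i<N. indicator (E i) \<omega> = real (rs!i))"
proof -
  have len: "length rs = N" using rs by (simp add: bin_lists_def)
  have el: "rs!i = 0 \<or> rs!i = 1" if "i < N" for i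
  proof -
    have "rs!i \<in> set rs" by (rule nth_mem) (use that len in simp)
    then show ?thesis using rs by (auto simp: bin_lists_def)
  qed
  have "(vecE E N \<omega> = rs) \<longleftrightarrow> (\<forall>i<N. (if \<omega> \<in> E i then 1 else 0) = rs!i)"
    by (auto simp: vecE_def list_eq_iff_nth_eq len)
  also have "\<dots> \<longleftrightarrow> (\<forall>i<N. indicator (E i) \<omega> = real (rs!i))"
    using el by (auto simp: indicator_def)
  finally show ?thesis .
qed

lemma jp_vec:
  assumes rs: "rs \<in> bin_lists N"
  shows "joint_prob M E rs = measure M {\<omega>\<in>space M. vecE E N \<omega> = rs}"
proof -
  have len: "length rs = N" using rs by (simp add: bin_lists_def)
  show ?thesis unfolding joint_prob_def len using vec_eq_iff[OF rs, of E] by simp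
qed

lemma vec_set_sets:
  assumes "\<And>i. i < N \<Longrightarrow> E i \<in> sets M" "rs \<in> bin_lists N"
  shows "{\<omega>\<in>space M. vecE E N \<omega> = rs} \<in> sets M"
proof -
  have "{\<omega>\<in>space M. vecE E N \<omega> = rs} = {\<omega>\<in>space M. \<forall>i\<in>{..<N}. indicator (E i) \<omega> = real (rs!i)}"
    using vec_eq_iff[OF assms(2), of E] by auto
  also have "\<dots> \<in> sets M"
  proof (rule sets.sets_Collect_finite_All)
    fix i assume i: "i \<in> {..<N}"
    have "{\<omega>\<in>space M. indicator (E i) \<omega> = real (rs!i)} =
          (if rs!i = 1 then space M \<inter> E i else if rs!i = 0 then space M - E i else {})"
      by (auto simp: indicator_def)
    then show "{\<omega>\<in>space M. indicator (E i) \<omega> = real (rs!i)} \<in> sets M"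
      using assms(1)[of i] i by auto
  qed simp
  finally show ?thesis .
qed

lemma meas_vec:
  assumes P: "prob_space M" and ES: "\<And>i. i < N \<Longrightarrow> E i \<in> sets M"
  shows "measure M {\<omega>\<in>space M. Q (vecE E N \<omega>)} = (\<Sum>rs\<in>{rs\<in>bin_lists N. Q rs}. joint_prob M E rs)"
proof -
  interpret prob_space M by (rule P)
  have "{\<omega>\<in>space M. Q (vecE E N \<omega>)} = (\<Union>rs\<in>{rs\<in>bin_lists N. Q rs}. {\<omega>\<in>space M. vecE E N \<omega> = rs})"
    using vec_bin[of E N] by auto
  then have "measure M {\<omega>\<in>space M. Q (vecE E N \<omega>)} =
             measure M (\<Union>rs\<in>{rs\<in>bin_lists N. Q rs}. {\<omega>\<in>space M. vecE E N \<omega> = rs})" by simp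
  also have "\<dots> = (\<Sum>rs\<in>{rs\<in>bin_lists N. Q rs}. measure M {\<omega>\<in>space M. vecE E N \<omega> = rs})"
    by (rule finite_measure_finite_Union)
       (auto simp: finite_bin_lists disjoint_family_on_def intro!: vec_set_sets ES)
  also have "\<dots> = (\<Sum>rs\<in>{rs\<in>bin_lists N. Q rs}. joint_prob M E rs)"
    by (rule sum.cong) (auto simp: jp_vec)
  finally show ?thesis .
qed

lemma sym_h:
  assumes S: "symmetric_events M E N" and rs: "rs \<in> bin_lists N"
  shows "joint_prob M E rs = joint_prob M E (replicate (sum_list rs) 1 @ replicate (N - sum_list rs) 0)"
proof -
  have len: "length rs = N" and st: "set rs \<subseteq> {0,1}" using rs by (auto simp: bin_lists_def)
  let ?t = "replicate (sum_list rs) 1 @ replicate (N - sum_list rs) (0::nat)"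
  have "mset ?t = mset rs" using mset01[OF st] len by simp
  then obtain p where p: "p permutes {..<length rs}" "permute_list p rs = ?t"
    by (rule mset_eq_permutation)
  have "joint_prob M E rs = joint_prob M E (map (\<lambda>i. rs ! p i) [0..<N])"
    using S rs p(1) len unfolding symmetric_events_def by auto
  also have "map (\<lambda>i. rs ! p i) [0..<N] = ?t"
    using p(2) len by (simp add: permute_list_def)
  finally show ?thesis .
qed

lemma card_vec: "sum_list (vecE E N \<omega>) = card {i \<in> {..<N}. \<omega> \<in> E i}"
proof (induction N)
  case 0
  then show ?case by (simp add: vecE_def)
next
  case (Suc N)
  have "{i \<in> {..<Suc N}. \<omega> \<in> E i} = {i \<in> {..<N}. \<omega> \<in> E i} \<union> (if \<omega> \<in> E N then {N} else {})"
    by (auto simp: less_Suc_eq)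
  then show ?case using Suc by (auto simp: vecE_def)
qed



declare corr_fun.simps[simp del]

context
  fixes M :: "'a measure" and E :: "nat \<Rightarrow> 'a set" and N :: nat
  assumes P: "prob_space M" and ES: "\<And>i. i < N \<Longrightarrow> E i \<in> sets M"
    and S: "symmetric_events M E N"
begin

definition hh :: "nat \<Rightarrow> real" where
  "hh m = joint_prob M E (replicate m 1 @ replicate (N-m) 0)"

lemma jp_h: "rs \<in> bin_lists N \<Longrightarrow> joint_prob M E rs = hh (sum_list rs)"
  unfolding hh_def by (rule sym_h[OF S])

lemma count_formula: "count_prob M E N s = real (N choose s) * hh s"
proof -
  have "count_prob M E N s = measure M {\<omega>\<in>space M. sum_list (vecE E N \<omega>) = s}"
    unfolding count_prob_def card_vec ..
  also have "\<dots> = (\<Sum>rs\<in>{rs\<in>bin_lists N. sum_list rs = s}. joint_prob M E rs)"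
    by (rule meas_vec[OF P ES])
  also have "\<dots> = (\<Sum>rs\<in>{rs\<in>bin_lists N. sum_list rs = s}. hh (sum_list rs))"
    by (rule sum.cong) (auto simp: jp_h)
  also have "\<dots> = (\<Sum>rs\<in>bin_lists N. if sum_list rs = s then hh (sum_list rs) else 0)"
    by (rule sum.inter_filter[OF finite_bin_lists])
  also have "\<dots> = (\<Sum>j\<le>N. real (N choose j) * (if j = s then hh j else 0))"
    using sum_bin_lists[of "\<lambda>j. if j = s then hh j else 0" N] by simp
  also have "\<dots> = real (N choose s) * hh s"
    by (cases "s \<le> N") (auto simp: if_distrib sum.delta' cong: if_cong)
  finally show ?thesis .
qed

lemma pi_formula:
  assumes "k \<le> N"
  shows "prob_fun M E N (replicate k 1) = (\<Sum>j\<le>N-k. real ((N-k) choose j) * hh (k+j))"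
proof -
  have "prob_fun M E N (replicate k 1) = (\<Sum>rs\<in>bin_lists (N-k). joint_prob M E (replicate k 1 @ rs))"
    by (simp add: prob_fun_def)
  also have "\<dots> = (\<Sum>rs\<in>bin_lists (N-k). (\<lambda>j. hh (k+j)) (sum_list rs))"
  proof (rule sum.cong[OF refl])
    fix rs assume rs: "rs \<in> bin_lists (N-k)"
    have "replicate k 1 @ rs \<in> bin_lists N" using rs assms by (auto simp: bin_lists_def)
    then show "joint_prob M E (replicate k 1 @ rs) = (\<lambda>j. hh (k+j)) (sum_list rs)"
      by (simp add: jp_h sum_list_replicate)
  qed
  also have "\<dots> = (\<Sum>j\<le>N-k. real ((N-k) choose j) * hh (k+j))"
    by (rule sum_bin_lists)
  finally show ?thesis .
qed

lemma h_inv: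
  assumes "s \<le> N"
  shows "hh s = (\<Sum>j\<le>N-s. (-1)^j * real ((N-s) choose j) * prob_fun M E N (replicate (s+j) 1))"
proof -
  have "(\<Sum>j\<le>N-s. (-1)^j * real ((N-s) choose j) * prob_fun M E N (replicate (s+j) 1)) =
        (\<Sum>j\<le>N-s. (-1)^j * real ((N-s) choose j) * (\<Sum>i\<le>(N-s)-j. real (((N-s)-j) choose i) * (\<lambda>i. hh (s+i)) (j+i)))"
  proof (rule sum.cong[OF refl])
    fix j assume j: "j \<in> {..N-s}"
    have "N - (s+j) = (N-s) - j" by simp
    then show "(-1)^j * real ((N-s) choose j) * prob_fun M E N (replicate (s+j) 1) =
        (-1)^j * real ((N-s) choose j) * (\<Sum>i\<le>(N-s)-j. real (((N-s)-j) choose i) * (\<lambda>i. hh (s+i)) (j+i))"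
      using pi_formula[of "s+j"] j assms by (simp add: add.assoc)
  qed
  also have "\<dots> = hh s"
    using inversion_aux[of "N-s" "\<lambda>i. hh (s+i)"] by simp
  finally show ?thesis by simp
qed

lemma pi0: "prob_fun M E N [] = 1"
proof -
  interpret prob_space M by (rule P)
  have "prob_fun M E N [] = (\<Sum>rs\<in>{rs\<in>bin_lists N. True}. joint_prob M E rs)"
    by (simp add: prob_fun_def)
  also have "\<dots> = measure M {\<omega>\<in>space M. True}"
    by (rule meas_vec[OF P ES, symmetric])
  also have "\<dots> = 1" using prob_space.prob_space[OF P] by simp
  finally show ?thesis .
qed

lemma corr_rec:
  assumes k: "k \<ge> 2"
  shows "corr_fun M E N (replicate k 1) = prob_fun M E N (replicate k 1) -
    (\<Sum>l=1..k-1. real ((k-1) choose (l-1)) * corr_fun M E N (replicate l 1) * prob_fun M E N (replicate (k-l) 1))"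
proof -
  have mp: "map (\<lambda>i. replicate k (Suc 0) ! \<sigma> i) [0..<k] = replicate k (Suc 0)" if \<sigma>: "\<sigma> permutes {Suc 0..<k}" for \<sigma>
  proof (rule nth_equalityI)
    show "length (map (\<lambda>i. replicate k (Suc 0) ! \<sigma> i) [0..<k]) = length (replicate k (Suc 0))" by simp
    fix i assume "i < length (map (\<lambda>i. replicate k (Suc 0) ! \<sigma> i) [0..<k])"
    then have i: "i < k" by simp
    have "\<sigma> i < k"
    proof (cases "i \<in> {Suc 0..<k}")
      case True then show ?thesis using permutes_in_image[OF \<sigma>] by auto
    next
      case False then show ?thesis using permutes_not_in[OF \<sigma>] i by auto
    qed
    then show "map (\<lambda>i. replicate k (Suc 0) ! \<sigma> i) [0..<k] ! i = replicate k (Suc 0) ! i" using i by simp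
  qed
  have cp: "card {\<sigma>. \<sigma> permutes {1..<k}} = fact (k-1)"
    by (rule card_permutations) auto
  have "corr_fun M E N (replicate k 1) = prob_fun M E N (replicate k 1) -
        (\<Sum>\<sigma>\<in>{\<sigma>. \<sigma> permutes {1..<k}}. \<Sum>l = 1..k-1.
           1 / (fact (l-1) * fact (k-l)) * corr_fun M E N (replicate l 1) * prob_fun M E N (replicate (k-l) 1))"
  proof -
    have u: "corr_fun M E N (replicate k 1) = prob_fun M E N (replicate k 1) -
        (\<Sum>\<sigma>\<in>{\<sigma>. \<sigma> permutes {1..<k}}. \<Sum>l = 1..k-1.
           1 / (fact (l-1) * fact (k-l)) * corr_fun M E N (take l (map (\<lambda>i. replicate k 1 ! \<sigma> i) [0..<k])) *
              prob_fun M E N (drop l (map (\<lambda>i. replicate k 1 ! \<sigma> i) [0..<k])))"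
      using corr_fun.simps[of M E N "replicate k 1"] k by simp
    have v: "(\<Sum>\<sigma>\<in>{\<sigma>. \<sigma> permutes {1..<k}}. \<Sum>l = 1..k-1.
           1 / (fact (l-1) * fact (k-l)) * corr_fun M E N (take l (map (\<lambda>i. replicate k 1 ! \<sigma> i) [0..<k])) *
              prob_fun M E N (drop l (map (\<lambda>i. replicate k 1 ! \<sigma> i) [0..<k]))) =
          (\<Sum>\<sigma>\<in>{\<sigma>. \<sigma> permutes {1..<k}}. \<Sum>l = 1..k-1.
           1 / (fact (l-1) * fact (k-l)) * corr_fun M E N (replicate l 1) * prob_fun M E N (replicate (k-l) 1))"
    proof (rule sum.cong[OF refl], rule sum.cong[OF refl])
      fix \<sigma> l assume \<sigma>: "\<sigma> \<in> {\<sigma>. \<sigma> permutes {1..<k}}" and l: "l \<in> {1..k-1}"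
      have m: "map (\<lambda>i. replicate k (1::nat) ! \<sigma> i) [0..<k] = replicate k 1" using mp[of \<sigma>] \<sigma> by (simp add: One_nat_def)
      show "1 / (fact (l-1) * fact (k-l)) * corr_fun M E N (take l (map (\<lambda>i. replicate k 1 ! \<sigma> i) [0..<k])) *
              prob_fun M E N (drop l (map (\<lambda>i. replicate k 1 ! \<sigma> i) [0..<k])) =
            1 / (fact (l-1) * fact (k-l)) * corr_fun M E N (replicate l 1) * prob_fun M E N (replicate (k-l) 1)"
      proof -
        have "l \<le> k" using l by auto
        then show ?thesis unfolding m by (simp add: min_def)
      qed
    qed
    show ?thesis using u v by simp
  qed
  also have "(\<Sum>\<sigma>\<in>{\<sigma>. \<sigma> permutes {1..<k}}. \<Sum>l = 1..k-1.
           1 / (fact (l-1) * fact (k-l)) * corr_fun M E N (replicate l 1) * prob_fun M E N (replicate (k-l) 1)) =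
        (\<Sum>l=1..k-1. real ((k-1) choose (l-1)) * corr_fun M E N (replicate l 1) * prob_fun M E N (replicate (k-l) 1))"
  proof -
    have "(\<Sum>\<sigma>\<in>{\<sigma>. \<sigma> permutes {1..<k}}. \<Sum>l = 1..k-1.
           1 / (fact (l-1) * fact (k-l)) * corr_fun M E N (replicate l 1) * prob_fun M E N (replicate (k-l) 1)) =
          fact (k-1) * (\<Sum>l = 1..k-1.
           1 / (fact (l-1) * fact (k-l)) * corr_fun M E N (replicate l 1) * prob_fun M E N (replicate (k-l) 1))"
      using cp by simp
    also have "\<dots> = (\<Sum>l=1..k-1. real ((k-1) choose (l-1)) * corr_fun M E N (replicate l 1) * prob_fun M E N (replicate (k-l) 1))"
      unfolding sum_distrib_left
    proof (rule sum.cong[OF refl])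
      fix l assume l: "l \<in> {1..k-1}"
      have "real ((k-1) choose (l-1)) = fact (k-1) / (fact (l-1) * fact (k-1-(l-1)))"
        by (rule binomial_fact) (use l in auto)
      moreover have "k-1-(l-1) = k - l" using l by auto
      ultimately show "fact (k-1) * (1 / (fact (l-1) * fact (k-l)) * corr_fun M E N (replicate l 1) * prob_fun M E N (replicate (k-l) 1)) =
            real ((k-1) choose (l-1)) * corr_fun M E N (replicate l 1) * prob_fun M E N (replicate (k-l) 1)"
        by simp
    qed
    finally show ?thesis .
  qed
  finally show ?thesis .
qed

lemma mu_rel:
  fixes Cl :: "nat \<Rightarrow> real"
  assumes cc: "\<And>l. 1 \<le> l \<Longrightarrow> l \<le> N \<Longrightarrow> real N ^ l * corr_fun M E N (replicate l 1) = Cl l"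
  shows "k \<le> N \<Longrightarrow> real N ^ k * prob_fun M E N (replicate k 1) = mu Cl k"
proof (induction k rule: less_induct)
  case (less k)
  show ?case
  proof (cases "k \<le> 1")
    case True
    then consider "k = 0" | "k = 1" by linarith
    then show ?thesis
    proof cases
      case 1 then show ?thesis using pi0 by (simp add: mu.simps)
    next
      case 2
      have "corr_fun M E N (replicate 1 1) = prob_fun M E N (replicate 1 1)"
        by (subst corr_fun.simps) simp
      then show ?thesis using cc[of 1] less.prems 2 by (simp add: mu.simps)
    qed
  next
    case False
    then have k2: "k \<ge> 2" by simp
    have pw: "real N ^ k = real N ^ l * real N ^ (k-l)" if "l \<in> {1..k-1}" for l
    proof -
      have "l + (k-l) = k" using that by auto
      then show ?thesis by (metis power_add)
    qed
    have hpk: "prob_fun M E N (replicate k 1) = corr_fun M E N (replicate k 1) +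
        (\<Sum>l=1..k-1. real ((k-1) choose (l-1)) * corr_fun M E N (replicate l 1) * prob_fun M E N (replicate (k-l) 1))"
      using corr_rec[OF k2] by simp
    have e: "real N ^ k * (\<Sum>l=1..k-1. real ((k-1) choose (l-1)) * corr_fun M E N (replicate l 1) * prob_fun M E N (replicate (k-l) 1)) =
          (\<Sum>l=1..k-1. real ((k-1) choose (l-1)) * (real N ^ l * corr_fun M E N (replicate l 1)) *
              (real N ^ (k-l) * prob_fun M E N (replicate (k-l) 1)))"
      unfolding sum_distrib_left
    proof (rule sum.cong[OF refl])
      fix l assume l: "l \<in> {1..k-1}"
      show "real N ^ k * (real ((k-1) choose (l-1)) * corr_fun M E N (replicate l 1) * prob_fun M E N (replicate (k-l) 1)) =
          real ((k-1) choose (l-1)) * (real N ^ l * corr_fun M E N (replicate l 1)) *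
              (real N ^ (k-l) * prob_fun M E N (replicate (k-l) 1))"
        unfolding pw[OF l] by (simp add: mult_ac)
    qed
    have "real N ^ k * prob_fun M E N (replicate k 1) =
          real N ^ k * corr_fun M E N (replicate k 1) +
          (\<Sum>l=1..k-1. real ((k-1) choose (l-1)) * (real N ^ l * corr_fun M E N (replicate l 1)) *
              (real N ^ (k-l) * prob_fun M E N (replicate (k-l) 1)))"
      by (subst hpk, subst distrib_left, subst e) (rule refl)
    also have "\<dots> = Cl k + (\<Sum>l=1..k-1. real ((k-1) choose (l-1)) * Cl l * mu Cl (k-l))"
    proof -
      have "real N ^ k * corr_fun M E N (replicate k 1) = Cl k" using cc[of k] k2 less.prems by simp
      moreover have "(\<Sum>l=1..k-1. real ((k-1) choose (l-1)) * (real N ^ l * corr_fun M E N (replicate l 1)) *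
              (real N ^ (k-l) * prob_fun M E N (replicate (k-l) 1))) =
            (\<Sum>l=1..k-1. real ((k-1) choose (l-1)) * Cl l * mu Cl (k-l))"
      proof (rule sum.cong[OF refl])
        fix l assume l: "l \<in> {1..k-1}"
        have "l \<le> N" using l less.prems by auto
        then have "real N ^ l * corr_fun M E N (replicate l 1) = Cl l" using cc[of l] l by simp
        moreover have "real N ^ (k-l) * prob_fun M E N (replicate (k-l) 1) = mu Cl (k-l)"
          proof -
          have "k - l < k" "k - l \<le> N" using l less.prems by auto
          then show ?thesis using less.IH[of "k-l"] by simp
        qed
        ultimately show "real ((k-1) choose (l-1)) * (real N ^ l * corr_fun M E N (replicate l 1)) *
              (real N ^ (k-l) * prob_fun M E N (replicate (k-l) 1)) = real ((k-1) choose (l-1)) * Cl l * mu Cl (k-l)"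
          by simp
      qed
      ultimately show ?thesis by simp
    qed
    also have "\<dots> = mu Cl k"
    proof -
      have "{1..k} = insert k {1..k-1}" using k2 by auto
      then have "(\<Sum>l=1..k. real ((k-1) choose (l-1)) * Cl l * mu Cl (k-l)) =
            real ((k-1) choose (k-1)) * Cl k * mu Cl (k-k) + (\<Sum>l=1..k-1. real ((k-1) choose (l-1)) * Cl l * mu Cl (k-l))"
        using k2 by simp
      then show ?thesis using k2 by (subst (2) mu.simps) (simp add: mu.simps)
    qed
    finally show ?thesis .
  qed
qed

end



definition dd :: "nat \<Rightarrow> nat \<Rightarrow> real" where
  "dd N k = real (N choose k) * fact k / real N ^ k"

lemma dd_prod: "real (N choose k) * fact k = (\<Prod>i = 0..<k. real N - real i)"
  by (simp add: binomial_gbinomial gbinomial_mult_fact')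

lemma dd_bound: "\<bar>dd N k\<bar> \<le> 1"
proof (cases "k \<le> N")
  case True
  have nn: "0 \<le> (\<Prod>i = 0..<k. real N - real i)"
    by (rule prod_nonneg) (use True in auto)
  have le: "(\<Prod>i = 0..<k. real N - real i) \<le> (\<Prod>i = 0..<k. real N)"
    by (rule prod_mono) (use True in auto)
  show ?thesis
  proof (cases "N = 0")
    case True
    then have "k = 0" using \<open>k \<le> N\<close> by simp
    then show ?thesis using True by (simp add: dd_def)
  next
    case False
    have "dd N k = (\<Prod>i = 0..<k. real N - real i) / real N ^ k"
      unfolding dd_def dd_prod ..
    moreover have "(\<Prod>i = 0..<k. real N - real i) \<le> real N ^ k" using le by simp
    ultimately show ?thesis using nn False by (simp add: abs_of_nonneg divide_le_eq)
  qed
next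
  case False
  then show ?thesis by (simp add: dd_def binomial_eq_0)
qed

lemma dd_lim: "(\<lambda>N. dd N k) \<longlonglongrightarrow> 1"
proof -
  have "(\<lambda>N. \<Prod>i = 0..<k. 1 - real i / real N) \<longlonglongrightarrow> (\<Prod>i = 0..<k. 1 - 0)"
    by (intro tendsto_prod tendsto_diff tendsto_const lim_const_over_n)
  then have t: "(\<lambda>N. \<Prod>i = 0..<k. 1 - real i / real N) \<longlonglongrightarrow> 1" by simp
  have "eventually (\<lambda>N. (\<Prod>i = 0..<k. 1 - real i / real N) = dd N k) sequentially"
    using eventually_ge_at_top[of 1]
  proof eventually_elim
    case (elim N)
    then have N: "real N > 0" by simp
    have "dd N k = (\<Prod>i = 0..<k. real N - real i) / (\<Prod>i = 0..<k. real N)"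
      unfolding dd_def dd_prod by simp
    also have "\<dots> = (\<Prod>i = 0..<k. (real N - real i) / real N)"
      by (rule prod_dividef[symmetric])
    also have "\<dots> = (\<Prod>i = 0..<k. 1 - real i / real N)"
      using N by (intro prod.cong refl) (simp add: field_simps)
    finally show ?case by simp
  qed
  then show ?thesis by (rule Lim_transform_eventually[OF t])
qed

lemma count_repr:
  fixes M :: "'a measure" and E :: "nat \<Rightarrow> 'a set" and Cl :: "nat \<Rightarrow> real"
  assumes P: "prob_space M" and ES: "\<And>i. i < N \<Longrightarrow> E i \<in> sets M"
    and S: "symmetric_events M E N"
    and cc: "\<And>l. 1 \<le> l \<Longrightarrow> l \<le> N \<Longrightarrow> real N ^ l * corr_fun M E N (replicate l 1) = Cl l"
    and s: "s \<le> N"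
  shows "count_prob M E N s = (\<Sum>j. (-1)^j * dd N (s+j) * mu Cl (s+j) / (fact s * fact j))"
proof -
  have pk: "prob_fun M E N (replicate k 1) = mu Cl k / real N ^ k" if "k \<le> N" for k
  proof -
    have "real N ^ k \<noteq> 0" using that by (cases "N = 0") auto
    then show ?thesis using mu_rel[OF P ES S cc that] by (simp add: field_simps)
  qed
  have "count_prob M E N s = real (N choose s) * hh M E N s"
    by (rule count_formula[OF P ES S])
  also have "\<dots> = real (N choose s) * (\<Sum>j\<le>N-s. (-1)^j * real ((N-s) choose j) * prob_fun M E N (replicate (s+j) 1))"
    by (simp add: h_inv[OF P ES S s])
  also have "\<dots> = (\<Sum>j\<le>N-s. (-1)^j * dd N (s+j) * mu Cl (s+j) / (fact s * fact j))"
    unfolding sum_distrib_left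
  proof (rule sum.cong[OF refl])
    fix j assume j: "j \<in> {..N-s}"
    then have sj: "s + j \<le> N" using s by auto
    have cm: "(N choose (s+j)) * ((s+j) choose s) = (N choose s) * ((N - s) choose (s+j-s))"
      by (rule choose_mult) (use sj in auto)
    then have cm': "real (N choose s) * real ((N-s) choose j) = real (N choose (s+j)) * real ((s+j) choose s)"
      by (metis add_diff_cancel_left' of_nat_mult)
    have bf: "real ((s+j) choose s) = fact (s+j) / (fact s * fact j)"
      using binomial_fact[of s "s+j", where 'a=real] by simp
    show "real (N choose s) * ((-1)^j * real ((N-s) choose j) * prob_fun M E N (replicate (s+j) 1)) =
          (-1)^j * dd N (s+j) * mu Cl (s+j) / (fact s * fact j)"
    proof -
      have "real (N choose s) * ((-1)^j * real ((N-s) choose j) * prob_fun M E N (replicate (s+j) 1)) =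
            (-1)^j * (real (N choose s) * real ((N-s) choose j)) * (mu Cl (s+j) / real N ^ (s+j))"
        using pk[OF sj] by (simp add: mult_ac)
      also have "\<dots> = (-1)^j * (real (N choose (s+j)) * (fact (s+j) / (fact s * fact j))) * (mu Cl (s+j) / real N ^ (s+j))"
        unfolding cm' bf ..
      also have "\<dots> = (-1)^j * dd N (s+j) * mu Cl (s+j) / (fact s * fact j)"
        by (simp add: dd_def)
      finally show ?thesis .
    qed
  qed
  also have "\<dots> = (\<Sum>j. (-1)^j * dd N (s+j) * mu Cl (s+j) / (fact s * fact j))"
  proof (rule suminf_finite[symmetric])
    fix j assume "j \<notin> {..N-s}"
    then have "N < s + j" using s by auto
    then show "(-1)^j * dd N (s+j) * mu Cl (s+j) / (fact s * fact j) = 0"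
      by (simp add: dd_def binomial_eq_0)
  qed simp
  finally show ?thesis .
qed



theorem mainTheorem1:
  fixes lmax :: nat and C :: "nat \<Rightarrow> real" and N0 :: nat
    and M :: "nat \<Rightarrow> 'a measure" and E :: "nat \<Rightarrow> nat \<Rightarrow> 'a set"
  assumes "lmax \<ge> 1"
    and "\<And>N. N \<ge> N0 \<Longrightarrow> prob_space (M N)"
    and "\<And>N i. N \<ge> N0 \<Longrightarrow> i < N \<Longrightarrow> E N i \<in> sets (M N)"
    and "\<And>N. N \<ge> N0 \<Longrightarrow> symmetric_events (M N) (E N) N"
    and "\<And>N k. N \<ge> N0 \<Longrightarrow> 1 \<le> k \<Longrightarrow> k \<le> N \<Longrightarrow> k \<le> lmax \<Longrightarrow>
           corr_coeff (M N) (E N) N k = C k"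
    and "\<And>N k. N \<ge> N0 \<Longrightarrow> lmax < k \<Longrightarrow> k \<le> N \<Longrightarrow>
           corr_coeff (M N) (E N) N k = 0"
  shows "\<exists>p_inf :: nat \<Rightarrow> real.
           (\<forall>s. (\<lambda>N. count_prob (M N) (E N) N s) \<longlonglongrightarrow> p_inf s) \<and>
           (\<forall>u :: real.
              (\<lambda>s. exp (\<i> * complex_of_real (u * real s)) * complex_of_real (p_inf s)) sums
              exp (\<Sum>l = 1..lmax. \<Sum>t = 0..l.
                     complex_of_real ((-1) ^ (l - t) * C l / fact l * real (l choose t)) *
                     exp (\<i> * complex_of_real (real t * u))))"
proof -
  define Cl where "Cl l = (if l \<le> lmax then C l else 0)" for l
  have cz: "\<And>l. l > lmax \<Longrightarrow> Cl l = 0" by (simp add: Cl_def)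
  have rep: "count_prob (M N) (E N) N s = (\<Sum>j. (-1)^j * dd N (s+j) * mu Cl (s+j) / (fact s * fact j))"
    if N: "N \<ge> N0" and s: "s \<le> N" for N s
  proof (rule count_repr[OF assms(2)[OF N] assms(3)[OF N] assms(4)[OF N] _ s])
    fix l :: nat assume l: "1 \<le> l" "l \<le> N"
    show "real N ^ l * corr_fun (M N) (E N) N (replicate l 1) = Cl l"
    proof (cases "l \<le> lmax")
      case True
      then show ?thesis using assms(5)[OF N l True] unfolding corr_coeff_def Cl_def by simp
    next
      case False
      then show ?thesis using assms(6)[OF N _ l(2)] unfolding corr_coeff_def Cl_def by simp
    qed
  qed
  show ?thesis
  proof (intro exI[of _ "pinf Cl"] conjI allI)
    fix s
    have t: "(\<lambda>N. \<Sum>j. (-1)^j * dd N (s+j) * mu Cl (s+j) / (fact s * fact j)) \<longlonglongrightarrow> pinf Cl s"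
      by (rule pinf_limit[where L=lmax and c=Cl and dN=dd, OF cz dd_bound dd_lim])
    have "eventually (\<lambda>N. (\<Sum>j. (-1)^j * dd N (s+j) * mu Cl (s+j) / (fact s * fact j)) = count_prob (M N) (E N) N s) sequentially"
      using eventually_ge_at_top[of "max N0 s"] by eventually_elim (simp add: rep)
    then show "(\<lambda>N. count_prob (M N) (E N) N s) \<longlonglongrightarrow> pinf Cl s"
      by (rule Lim_transform_eventually[OF t])
  next
    fix u :: real
    define z where "z = exp (\<i> * complex_of_real u)"
    have g: "(\<lambda>s. z^s * complex_of_real (pinf Cl s)) sums
               exp (\<Sum>m<lmax. complex_of_real (Cl (Suc m) / fact (Suc m)) * (z - 1)^(Suc m))"
      by (rule pinf_gen[where L=lmax and c=Cl, OF cz])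
    have zs: "exp (\<i> * complex_of_real (u * real s)) = z^s" for s
    proof -
      have "exp (\<i> * complex_of_real (u * real s)) = exp (of_nat s * (\<i> * complex_of_real u))"
        by (simp add: mult_ac)
      then show ?thesis unfolding z_def exp_of_nat_mult .
    qed
    have zt: "exp (\<i> * complex_of_real (real t * u)) = z^t" for t
      using zs[of t] by (simp add: mult.commute)
    have rhs: "(\<Sum>l = 1..lmax. \<Sum>t = 0..l.
                 complex_of_real ((-1) ^ (l - t) * C l / fact l * real (l choose t)) *
                 exp (\<i> * complex_of_real (real t * u))) =
               (\<Sum>m<lmax. complex_of_real (Cl (Suc m) / fact (Suc m)) * (z - 1)^(Suc m))"
    proof -
      have inner: "(\<Sum>t = 0..l. complex_of_real ((-1) ^ (l - t) * C l / fact l * real (l choose t)) *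
                 exp (\<i> * complex_of_real (real t * u))) = complex_of_real (C l / fact l) * (z - 1)^l" for l
      proof -
        have "(z - 1)^l = (\<Sum>t\<le>l. of_nat (l choose t) * z^t * (-1)^(l-t))"
          using binomial_ring[of z "-1" l] by simp
        then have "complex_of_real (C l / fact l) * (z - 1)^l =
               (\<Sum>t\<le>l. complex_of_real (C l / fact l) * (of_nat (l choose t) * z^t * (-1)^(l-t)))"
          by (simp add: sum_distrib_left)
        also have "\<dots> = (\<Sum>t = 0..l. complex_of_real ((-1) ^ (l - t) * C l / fact l * real (l choose t)) *
                 exp (\<i> * complex_of_real (real t * u)))"
          unfolding atMost_atLeast0 zt by (intro sum.cong refl) (simp add: mult_ac)
        finally show ?thesis by simp
      qed
      have "(\<Sum>l = 1..lmax. \<Sum>t = 0..l.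
                 complex_of_real ((-1) ^ (l - t) * C l / fact l * real (l choose t)) *
                 exp (\<i> * complex_of_real (real t * u))) =
            (\<Sum>l = Suc 0..lmax. complex_of_real (C l / fact l) * (z - 1)^l)"
        unfolding inner by (simp only: One_nat_def)
      also have "\<dots> = (\<Sum>m<lmax. complex_of_real (C (Suc m) / fact (Suc m)) * (z - 1)^(Suc m))"
        by (rule sum.atLeast1_atMost_eq)
      also have "\<dots> = (\<Sum>m<lmax. complex_of_real (Cl (Suc m) / fact (Suc m)) * (z - 1)^(Suc m))"
        by (intro sum.cong refl) (simp add: Cl_def)
      finally show ?thesis .
    qed
    show "(\<lambda>s. exp (\<i> * complex_of_real (u * real s)) * complex_of_real (pinf Cl s)) sums
              exp (\<Sum>l = 1..lmax. \<Sum>t = 0..l.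
                     complex_of_real ((-1) ^ (l - t) * C l / fact l * real (l choose t)) *
                     exp (\<i> * complex_of_real (real t * u)))"
      unfolding zs rhs by (rule g)
  qed
qed

end
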